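(* Let $L$ be a pentagonal linkage and $X_k=\{P\in\overline{M^C}(L): |A_3A_5|=k\}$ a slice, parameterized on its relative interior by $x_2$, with prime denoting $d/dx_2$. Then on the relative interior of $X_k$ we have $(b_1)'<0$, $(b_3)'<0$ and $(b_5)'>0$; thus $b_1$ and $b_3$ are decreasing and $b_5$ is increasing in $x_2$.
   Context: A pentagonal linkage $L$ is given by side lengths $a_1,\dots,a_5>0$; $M(L)$ is the set of planar 5-gons $(A_1,\dots,A_5)$ with $|A_iA_{i+1}|=a_i$ (indices mod 5) modulo all isometries of $\mathbb{R}^2$; $M^C(L)$ is the set of strictly convex configurations (convex pentagon $A_1\dots A_5$ in this cyclic order, no angle equal to $\pi$) and $\overline{M^C}(L)$ its closure. $b_i=|A_{i-1}A_{i+1}|$, $x_i=b_i^2$ (indices mod 5). *)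

theory Defs
  imports "HOL-Analysis.Analysis"
begin

text \<open>A planar pentagon is given by a map A :: int => complex; only the values
A 1, ..., A 5 matter, and indices are taken modulo 5 (A_0 = A_5, A_6 = A_1, ...).\<close>

definition pt :: "(int \<Rightarrow> complex) \<Rightarrow> int \<Rightarrow> complex" where
  "pt A i = A ((i - 1) mod 5 + 1)"

definition cross :: "complex \<Rightarrow> complex \<Rightarrow> real" where
  "cross u v = Im (cnj u * v)"

definition is_config :: "(int \<Rightarrow> real) \<Rightarrow> (int \<Rightarrow> complex) \<Rightarrow> bool" where
  "is_config a A \<longleftrightarrow> (\<forall>i\<in>{1..5}. dist (pt A i) (pt A (i + 1)) = a i)"

text \<open>Strictly convex pentagon A_1...A_5 in this cyclic order with no angle equal to pi:
for every edge A_i A_{i+1}, all other vertices lie strictly on the same side of its line,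
with a common orientation for all edges.\<close>
definition strictly_convex :: "(int \<Rightarrow> complex) \<Rightarrow> bool" where
  "strictly_convex A \<longleftrightarrow>
     (\<forall>i\<in>{1..5}. \<forall>j\<in>{1..5}. j mod 5 \<noteq> i mod 5 \<and> j mod 5 \<noteq> (i + 1) mod 5 \<longrightarrow>
        cross (pt A (i + 1) - pt A i) (pt A j - pt A i) > 0)
   \<or> (\<forall>i\<in>{1..5}. \<forall>j\<in>{1..5}. j mod 5 \<noteq> i mod 5 \<and> j mod 5 \<noteq> (i + 1) mod 5 \<longrightarrow>
        cross (pt A (i + 1) - pt A i) (pt A j - pt A i) < 0)"

definition bd :: "(int \<Rightarrow> complex) \<Rightarrow> int \<Rightarrow> real" where
  "bd A i = dist (pt A (i - 1)) (pt A (i + 1))"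

definition xd :: "(int \<Rightarrow> complex) \<Rightarrow> int \<Rightarrow> real" where
  "xd A i = (bd A i)^2"

end

theory Submission
  imports Defs
begin

definition dot :: "complex \<Rightarrow> complex \<Rightarrow> real" where "dot u v = Re (cnj u * v)"
lemma cm2: "(cmod u)^2 = Re u ^2 + Im u ^2" by (simp add: cmod_power2)
lemma L2: "(dot u v)^2 + (cross u v)^2 = (cmod u)^2 * (cmod v)^2"
  unfolding dot_def cross_def cm2 by (simp add: algebra_simps power2_eq_square)
lemma L3: "(cmod u)^2 * dot v w = dot u v * dot u w + cross u v * cross u w"
  unfolding dot_def cross_def cm2 by (simp add: algebra_simps power2_eq_square)
lemma L4: "(cmod u)^2 * cross v w = dot u v * cross u w - cross u v * dot u w"
  unfolding dot_def cross_def cm2 by (simp add: algebra_simps power2_eq_square)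
lemma L5: "(cmod (u - v))^2 = (cmod u)^2 + (cmod v)^2 - 2 * dot u v"
  unfolding dot_def cross_def cm2 by (simp add: algebra_simps power2_eq_square)
lemma dot_diff: "dot u (v - w) = dot u v - dot u w" unfolding dot_def by (simp add: algebra_simps)
lemma dot_self: "dot u u = (cmod u)^2" unfolding dot_def cm2 by (simp add: power2_eq_square)
lemma dot_sym: "dot u v = dot v u" unfolding dot_def by (simp add: algebra_simps)
lemma cross_anti: "cross u v = - cross v u" unfolding cross_def by (simp add: algebra_simps)
lemma L6: assumes "cross u v > 0" shows "sqrt (1 - (dot u v / (cmod u * cmod v))^2) = cross u v / (cmod u * cmod v)"
proof -
  have nz: "u \<noteq> 0" "v \<noteq> 0" using assms unfolding cross_def by (auto simp: algebra_simps)
  have "1 - (dot u v / (cmod u * cmod v))^2 = (cross u v / (cmod u * cmod v))^2"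
    using L2[of u v] nz by (simp add: field_simps power_mult_distrib)
  thus ?thesis using assms nz by simp
qed
lemma L6n: assumes "cross u v < 0" shows "sqrt (1 - (dot u v / (cmod u * cmod v))^2) = - cross u v / (cmod u * cmod v)"
proof -
  have nz: "u \<noteq> 0" "v \<noteq> 0" using assms unfolding cross_def by (auto simp: algebra_simps)
  have "1 - (dot u v / (cmod u * cmod v))^2 = (cross u v / (cmod u * cmod v))^2"
    using L2[of u v] nz by (simp add: field_simps power_mult_distrib)
  thus ?thesis using assms nz by (simp add: divide_neg_pos)
qed

definition Sn :: "real \<Rightarrow> real" where "Sn x = sqrt (1 - x^2)"
definition C1 :: "real \<Rightarrow> real \<Rightarrow> real \<Rightarrow> real" where "C1 a5 k s = (s + k^2 - a5^2) / (2 * k * sqrt s)"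
definition C2 :: "real \<Rightarrow> real \<Rightarrow> real \<Rightarrow> real" where "C2 a1 a2 s = (s + a2^2 - a1^2) / (2 * a2 * sqrt s)"
definition cph where "cph a1 a2 a5 k s = C1 a5 k s * C2 a1 a2 s - Sn (C1 a5 k s) * Sn (C2 a1 a2 s)"
definition F1 where "F1 a1 a2 a5 k s = sqrt (k^2 + a2^2 - 2 * k * a2 * cph a1 a2 a5 k s)"
definition ca :: "real \<Rightarrow> real \<Rightarrow> real \<Rightarrow> real" where "ca a3 a4 k = (k^2 + a3^2 - a4^2) / (2 * k * a3)"
definition F3 where "F3 a1 a2 a3 a4 a5 k s = sqrt (a2^2 + a3^2 - 2 * a2 * a3 * (cph a1 a2 a5 k s * ca a3 a4 k - Sn (cph a1 a2 a5 k s) * Sn (ca a3 a4 k)))"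
definition D1 :: "real \<Rightarrow> real \<Rightarrow> real \<Rightarrow> real" where "D1 a5 k s = (k^2 + a5^2 - s) / (2 * k * a5)"
definition d0 :: "real \<Rightarrow> real \<Rightarrow> real \<Rightarrow> real" where "d0 a3 a4 k = (k^2 + a4^2 - a3^2) / (2 * k * a4)"
definition F5 where "F5 a3 a4 a5 k s = sqrt (a4^2 + a5^2 - 2 * a4 * a5 * (d0 a3 a4 k * D1 a5 k s - Sn (d0 a3 a4 k) * Sn (D1 a5 k s)))"

lemma geo:
  fixes P1 P2 P3 P4 P5 :: complex
  assumes d1: "cmod (P2 - P1) = a1" and d2: "cmod (P3 - P2) = a2" and d3: "cmod (P4 - P3) = a3"
    and d4: "cmod (P5 - P4) = a4" and d5: "cmod (P1 - P5) = a5" and dk: "cmod (P5 - P3) = k"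
    and ds: "(cmod (P1 - P3))^2 = s"
    and o135: "cross (P1 - P5) (P3 - P5) > 0"
    and o123: "cross (P2 - P1) (P3 - P1) > 0"
    and o235: "cross (P3 - P2) (P5 - P2) > 0"
    and o345: "cross (P4 - P3) (P5 - P3) > 0"
    and o145: "cross (P5 - P4) (P1 - P4) > 0"
    and o125: "cross (P2 - P1) (P5 - P1) > 0"
    and o234: "cross (P3 - P2) (P4 - P2) > 0"
  shows "cmod (P2 - P5) = F1 a1 a2 a5 k s" (is ?g1)
    and "cmod (P4 - P2) = F3 a1 a2 a3 a4 a5 k s" (is ?g3)
    and "cmod (P1 - P4) = F5 a3 a4 a5 k s" (is ?g5)
    and "k > 0" "s > 0" "Sn (C1 a5 k s) > 0" "Sn (C2 a1 a2 s) > 0" "Sn (cph a1 a2 a5 k s) > 0" "Sn (D1 a5 k s) > 0"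
    and "C2 a1 a2 s * Sn (C1 a5 k s) + C1 a5 k s * Sn (C2 a1 a2 s) > 0"
    and "(s - k^2 + a5^2) / (k * Sn (C1 a5 k s)) + (s - a2^2 + a1^2) / (a2 * Sn (C2 a1 a2 s)) > 0"
    and "ca a3 a4 k * Sn (cph a1 a2 a5 k s) + Sn (ca a3 a4 k) * cph a1 a2 a5 k s > 0"
    and "d0 a3 a4 k * Sn (D1 a5 k s) + Sn (d0 a3 a4 k) * D1 a5 k s > 0"
    and "k^2 + a2^2 - 2 * k * a2 * cph a1 a2 a5 k s > 0"
    and "a2^2 + a3^2 - 2 * a2 * a3 * (cph a1 a2 a5 k s * ca a3 a4 k - Sn (cph a1 a2 a5 k s) * Sn (ca a3 a4 k)) > 0"
    and "a4^2 + a5^2 - 2 * a4 * a5 * (d0 a3 a4 k * D1 a5 k s - Sn (d0 a3 a4 k) * Sn (D1 a5 k s)) > 0"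
proof -
  define m p q r where "m = P5 - P3" "p = P1 - P3" "q = P2 - P3" "r = P4 - P3"
  have cmp: "cross m p > 0" using o135 unfolding m_p_q_r_def cross_def by (simp add: algebra_simps)
  have cpq: "cross p q > 0" using o123 unfolding m_p_q_r_def cross_def by (simp add: algebra_simps)
  have cmq: "cross m q > 0" using o235 unfolding m_p_q_r_def cross_def by (simp add: algebra_simps)
  have cmr: "cross m r < 0" using o345 unfolding m_p_q_r_def cross_def by (simp add: algebra_simps)
  have km: "cmod m = k" "cmod q = a2" "cmod r = a3" using dk d2 d3 unfolding m_p_q_r_def by (simp_all add: norm_minus_commute)
  have ps: "(cmod p)^2 = s" using ds unfolding m_p_q_r_def by simp
  have sp: "sqrt s = cmod p" using ds unfolding m_p_q_r_def by (simp flip: ds)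
  have "(cmod (p - m))^2 = a5^2" "(cmod (q - p))^2 = a1^2" "(cmod (r - m))^2 = a4^2"
    using d5 d1 d4 unfolding m_p_q_r_def by (simp_all add: norm_minus_commute)
  hence dmp: "dot m p = (s + k^2 - a5^2)/2" and dpq: "dot p q = (s + a2^2 - a1^2)/2"
    and dmr: "dot m r = (k^2 + a3^2 - a4^2)/2"
    using L5[of p m] L5[of q p] L5[of r m] km ds sp dot_sym[of m p] dot_sym[of p q] dot_sym[of m r]
    by (auto simp: m_p_q_r_def)
  have nz: "m \<noteq> 0" "p \<noteq> 0" "q \<noteq> 0" "r \<noteq> 0"
    using cmp cpq cmr unfolding cross_def by (auto simp: algebra_simps)
  have kpos: "k > 0" "a2 > 0" "a3 > 0" using km nz by auto
  have eC1: "C1 a5 k s = dot m p / (cmod m * cmod p)"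
    unfolding C1_def dmp km(1)[symmetric] sp by (simp add: field_simps)
  have eS1: "Sn (C1 a5 k s) = cross m p / (cmod m * cmod p)"
    unfolding eC1 Sn_def using L6[OF cmp] .
  have eC2: "C2 a1 a2 s = dot p q / (cmod p * cmod q)"
    unfolding C2_def dpq km(2)[symmetric] sp by (simp add: field_simps)
  have eS2: "Sn (C2 a1 a2 s) = cross p q / (cmod p * cmod q)"
    unfolding eC2 Sn_def using L6[OF cpq] .
  have ecph: "cph a1 a2 a5 k s = dot m q / (cmod m * cmod q)"
  proof -
    have h: "dot m p * dot p q = cross m p * cross p q + (cmod p)^2 * dot m q"
      using L3[of p m q] by (simp add: dot_sym[of p m] cross_anti[of p m])
    show ?thesis unfolding cph_def eS1 eS2 unfolding eC1 eC2 using nz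
      by (simp add: field_simps power2_eq_square h)
  qed
  show g1: ?g1
  proof -
    have hq: "(cmod (q - m))^2 = k^2 + a2^2 - 2 * k * a2 * cph a1 a2 a5 k s"
      using nz kpos by (simp add: L5 ecph km dot_sym[of q m] field_simps)
    hence "F1 a1 a2 a5 k s = cmod (q - m)" unfolding F1_def by (simp flip: hq)
    thus ?thesis unfolding m_p_q_r_def by simp
  qed
  have eSc: "Sn (cph a1 a2 a5 k s) = cross m q / (cmod m * cmod q)"
    unfolding ecph Sn_def using L6[OF cmq] .
  have eca: "ca a3 a4 k = dot m r / (cmod m * cmod r)"
    unfolding ca_def dmr km(1)[symmetric] km(3)[symmetric] by (simp add: field_simps)
  have eSa: "Sn (ca a3 a4 k) = - cross m r / (cmod m * cmod r)"
    unfolding eca Sn_def using L6n[OF cmr] .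
  show g3: ?g3
  proof -
    have h: "dot m q * dot m r = k * k * dot q r - cross m q * cross m r"
      using L3[of m q r] km by (simp add: power2_eq_square)
    have e: "cph a1 a2 a5 k s * ca a3 a4 k - Sn (cph a1 a2 a5 k s) * Sn (ca a3 a4 k) = dot q r / (a2 * a3)"
      unfolding eSc eSa unfolding ecph eca using nz kpos
      by (simp add: field_simps power2_eq_square h km)
    have hq: "(cmod (r - q))^2 = a2^2 + a3^2 - 2 * a2 * a3 * (cph a1 a2 a5 k s * ca a3 a4 k - Sn (cph a1 a2 a5 k s) * Sn (ca a3 a4 k))"
      unfolding e using nz kpos by (simp add: L5 km dot_sym[of r q] field_simps)
    hence "F3 a1 a2 a3 a4 a5 k s = cmod (r - q)" unfolding F3_def by (simp flip: hq)
    thus ?thesis unfolding m_p_q_r_def by simp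
  qed
  define m2 r2 p2 where "m2 = P3 - P5" "r2 = P4 - P5" "p2 = P1 - P5"
  have c1: "cross m2 r2 > 0" using o345 unfolding m2_r2_p2_def cross_def by (simp add: algebra_simps)
  have c2: "cross m2 p2 < 0" using o135 unfolding m2_r2_p2_def cross_def by (simp add: algebra_simps)
  have km2: "cmod m2 = k" "cmod r2 = a4" "cmod p2 = a5" using dk d4 d5 unfolding m2_r2_p2_def by (simp_all add: norm_minus_commute)
  have nz2: "m2 \<noteq> 0" "r2 \<noteq> 0" "p2 \<noteq> 0" using c1 c2 unfolding cross_def by (auto simp: algebra_simps)
  have pos2: "a4 > 0" "a5 > 0" using km2 nz2 by auto
  have "(cmod (p2 - m2))^2 = s" "(cmod (r2 - m2))^2 = a3^2"
    using ds d3 unfolding m2_r2_p2_def by (simp_all add: norm_minus_commute)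
  hence dmp2: "dot m2 p2 = (k^2 + a5^2 - s)/2" and dmr2: "dot m2 r2 = (k^2 + a4^2 - a3^2)/2"
    using L5[of p2 m2] L5[of r2 m2] km2 dot_sym[of m2 p2] dot_sym[of m2 r2] by auto
  have eD1: "D1 a5 k s = dot m2 p2 / (cmod m2 * cmod p2)"
    unfolding D1_def dmp2 km2 by (simp add: field_simps)
  have eSD1: "Sn (D1 a5 k s) = - cross m2 p2 / (cmod m2 * cmod p2)"
    unfolding eD1 Sn_def using L6n[OF c2] .
  have ed0: "d0 a3 a4 k = dot m2 r2 / (cmod m2 * cmod r2)"
    unfolding d0_def dmr2 km2 by (simp add: field_simps)
  have eSd0: "Sn (d0 a3 a4 k) = cross m2 r2 / (cmod m2 * cmod r2)"
    unfolding ed0 Sn_def using L6[OF c1] .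
  show g5: ?g5
  proof -
    have h: "dot m2 p2 * dot m2 r2 = k * k * dot r2 p2 - cross m2 p2 * cross m2 r2"
      using L3[of m2 r2 p2] km2 by (simp add: power2_eq_square algebra_simps)
    have e: "d0 a3 a4 k * D1 a5 k s - Sn (d0 a3 a4 k) * Sn (D1 a5 k s) = dot r2 p2 / (a4 * a5)"
      unfolding eSd0 eSD1 unfolding ed0 eD1 using nz2 pos2 kpos
      by (simp add: field_simps power2_eq_square h km2)
    have hq: "(cmod (p2 - r2))^2 = a4^2 + a5^2 - 2 * a4 * a5 * (d0 a3 a4 k * D1 a5 k s - Sn (d0 a3 a4 k) * Sn (D1 a5 k s))"
      unfolding e using pos2 by (simp add: L5 km2 dot_sym[of p2 r2] field_simps)
    hence "F5 a3 a4 a5 k s = cmod (p2 - r2)" unfolding F5_def by (simp flip: hq)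
    thus ?thesis unfolding m2_r2_p2_def by simp
  qed
  show "s > 0" using nz sp ds by auto
  show "k > 0" by (rule kpos(1))
  show "Sn (C1 a5 k s) > 0" unfolding eS1 using cmp nz by simp
  show "Sn (C2 a1 a2 s) > 0" unfolding eS2 using cpq nz by simp
  show "Sn (cph a1 a2 a5 k s) > 0" unfolding eSc using cmq nz by simp
  show "Sn (D1 a5 k s) > 0" unfolding eSD1 using c2 nz2 by (simp add: divide_neg_pos)
  show "C2 a1 a2 s * Sn (C1 a5 k s) + C1 a5 k s * Sn (C2 a1 a2 s) > 0"
  proof -
    have h: "cross p q * dot m p = cmod p * cmod p * cross m q - cross m p * dot p q"
      using L4[of p m q] by (simp add: dot_sym[of p m] cross_anti[of p m] power2_eq_square algebra_simps)
    have "C2 a1 a2 s * Sn (C1 a5 k s) + C1 a5 k s * Sn (C2 a1 a2 s) = cross m q / (cmod m * cmod q)"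
      unfolding eS1 eS2 unfolding eC1 eC2 using nz
      by (simp add: field_simps h)
    thus ?thesis using cmq nz by simp
  qed
  show "(s - k^2 + a5^2) / (k * Sn (C1 a5 k s)) + (s - a2^2 + a1^2) / (a2 * Sn (C2 a1 a2 s)) > 0"
  proof -
    have o: "cross (q - p) (m - p) > 0" using o125 unfolding m_p_q_r_def cross_def by (simp add: algebra_simps)
    have id: "dot p (p - m) * cross p q + dot p (p - q) * cross m p = (cmod p)^2 * cross (q - p) (m - p)"
      unfolding dot_def cross_def cm2 by (simp add: algebra_simps power2_eq_square)
    have X: "s - k^2 + a5^2 = 2 * dot p (p - m)" and Y: "s - a2^2 + a1^2 = 2 * dot p (p - q)"
      using dmp dpq km ps by (auto simp: dot_diff dot_self dot_sym[of p m])
    have pos: "dot p (p - m) * cross p q + dot p (p - q) * cross m p > 0" unfolding id using o nz by simp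
    have "(s - k^2 + a5^2) / (k * Sn (C1 a5 k s)) + (s - a2^2 + a1^2) / (a2 * Sn (C2 a1 a2 s))
       = 2 * cmod p * (dot p (p - m) * cross p q + dot p (p - q) * cross m p) / (cross m p * cross p q)"
      unfolding eS1 eS2 X Y km using nz cmp cpq kpos by (simp add: field_simps)
    thus ?thesis using pos cmp cpq nz by simp
  qed
  show "ca a3 a4 k * Sn (cph a1 a2 a5 k s) + Sn (ca a3 a4 k) * cph a1 a2 a5 k s > 0"
  proof -
    have o: "cross r q > 0" using o234 unfolding m_p_q_r_def cross_def by (simp add: algebra_simps)
    have h: "dot m r * cross m q - cross m r * dot m q = (cmod m)^2 * cross r q"
      using L4[of m r q] by simp
    have "ca a3 a4 k * Sn (cph a1 a2 a5 k s) + Sn (ca a3 a4 k) * cph a1 a2 a5 k s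
        = (dot m r * cross m q - cross m r * dot m q) / ((cmod m)^2 * cmod q * cmod r)"
      unfolding eSc eSa unfolding eca ecph using nz by (simp add: field_simps power2_eq_square)
    thus ?thesis unfolding h using o nz by simp
  qed
  show "d0 a3 a4 k * Sn (D1 a5 k s) + Sn (d0 a3 a4 k) * D1 a5 k s > 0"
  proof -
    have o: "cross r2 p2 < 0" using o145 unfolding m2_r2_p2_def cross_def by (simp add: algebra_simps)
    have h: "dot m2 r2 * cross m2 p2 - cross m2 r2 * dot m2 p2 = (cmod m2)^2 * cross r2 p2"
      using L4[of m2 r2 p2] by simp
    have "d0 a3 a4 k * Sn (D1 a5 k s) + Sn (d0 a3 a4 k) * D1 a5 k s
        = - (dot m2 r2 * cross m2 p2 - cross m2 r2 * dot m2 p2) / ((cmod m2)^2 * cmod r2 * cmod p2)"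
      unfolding eSd0 eSD1 unfolding ed0 eD1 using nz2 by (simp add: field_simps power2_eq_square)
    thus ?thesis unfolding h using o nz2 by (simp add: divide_neg_pos mult_pos_neg)
  qed
  have "P2 \<noteq> P5" using o125 unfolding cross_def by (auto simp: algebra_simps)
  thus "k^2 + a2^2 - 2 * k * a2 * cph a1 a2 a5 k s > 0" using g1 unfolding F1_def
    by (metis real_sqrt_gt_0_iff right_minus_eq zero_less_norm_iff)
  have "P2 \<noteq> P4" using o234 unfolding cross_def by (auto simp: algebra_simps)
  thus "a2^2 + a3^2 - 2 * a2 * a3 * (cph a1 a2 a5 k s * ca a3 a4 k - Sn (cph a1 a2 a5 k s) * Sn (ca a3 a4 k)) > 0"
    using g3 unfolding F3_def by (metis real_sqrt_gt_0_iff right_minus_eq zero_less_norm_iff)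
  have "P1 \<noteq> P4" using o145 unfolding cross_def by (auto simp: algebra_simps)
  thus "a4^2 + a5^2 - 2 * a4 * a5 * (d0 a3 a4 k * D1 a5 k s - Sn (d0 a3 a4 k) * Sn (D1 a5 k s)) > 0"
    using g5 unfolding F5_def by (metis real_sqrt_gt_0_iff right_minus_eq zero_less_norm_iff)
qed


lemma Dsqrt: assumes "(g has_real_derivative g') (at t)" "g t > 0"
  shows "((\<lambda>s. sqrt (g s)) has_real_derivative (g' / (2 * sqrt (g t)))) (at t)"
proof -
  have "((\<lambda>s. sqrt (g s)) has_real_derivative (inverse (sqrt (g t)) / 2 * g')) (at t)"
    using DERIV_chain2[OF DERIV_real_sqrt[OF assms(2)] assms(1)] .
  thus ?thesis by (simp add: field_simps)
qed
lemma DSn: assumes "(g has_real_derivative g') (at t)" "Sn (g t) > 0"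
  shows "((\<lambda>s. Sn (g s)) has_real_derivative (- g t * g' / Sn (g t))) (at t)"
proof -
  have p: "1 - (g t)^2 > 0" using assms(2) unfolding Sn_def by simp
  have "((\<lambda>s. 1 - (g s)^2) has_real_derivative (- (2 * g t * g'))) (at t)"
    using assms(1) by (auto intro!: derivative_eq_intros)
  from Dsqrt[OF this p] show ?thesis unfolding Sn_def by (simp add: field_simps)
qed
lemma DC1: assumes "k > 0" "t > 0"
  shows "(C1 a5 k has_real_derivative ((t - k^2 + a5^2) / (4 * k * t * sqrt t))) (at t)"
proof -
  have "((\<lambda>s. (s + k^2 - a5^2) / (2 * k * sqrt s)) has_real_derivative ((t - k^2 + a5^2) / (4 * k * t * sqrt t))) (at t)"
    using assms
    apply (auto intro!: derivative_eq_intros)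
    apply (simp add: field_simps)
    done
  thus ?thesis unfolding C1_def[abs_def] .
qed
lemma DC2: assumes "a2 > 0" "t > 0"
  shows "(C2 a1 a2 has_real_derivative ((t - a2^2 + a1^2) / (4 * a2 * t * sqrt t))) (at t)"
proof -
  have "((\<lambda>s. (s + a2^2 - a1^2) / (2 * a2 * sqrt s)) has_real_derivative ((t - a2^2 + a1^2) / (4 * a2 * t * sqrt t))) (at t)"
    using assms
    apply (auto intro!: derivative_eq_intros)
    apply (simp add: field_simps)
    done
  thus ?thesis unfolding C2_def[abs_def] .
qed
lemma DD1: assumes "k > 0" "a5 > 0"
  shows "(D1 a5 k has_real_derivative (- 1 / (2 * k * a5))) (at t)"
  unfolding D1_def[abs_def] using assms by (auto intro!: derivative_eq_intros simp: field_simps)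

lemma Dcph:
  assumes pos: "k > 0" "a2 > 0" "t > 0"
    and S1: "Sn (C1 a5 k t) > 0" and S2: "Sn (C2 a1 a2 t) > 0"
    and sn: "C2 a1 a2 t * Sn (C1 a5 k t) + C1 a5 k t * Sn (C2 a1 a2 t) > 0"
    and ct: "(t - k^2 + a5^2) / (k * Sn (C1 a5 k t)) + (t - a2^2 + a1^2) / (a2 * Sn (C2 a1 a2 t)) > 0"
  shows "\<exists>D. (cph a1 a2 a5 k has_real_derivative D) (at t) \<and> D > 0"
proof -
  define c1 c2 s1 s2 d1 d2 where "c1 = C1 a5 k t" "c2 = C2 a1 a2 t" "s1 = Sn (C1 a5 k t)" "s2 = Sn (C2 a1 a2 t)"
    "d1 = (t - k^2 + a5^2) / (4 * k * t * sqrt t)" "d2 = (t - a2^2 + a1^2) / (4 * a2 * t * sqrt t)"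
  have h1: "(C1 a5 k has_real_derivative d1) (at t)" unfolding c1_c2_s1_s2_d1_d2_def using DC1 pos by simp
  have h2: "(C2 a1 a2 has_real_derivative d2) (at t)" unfolding c1_c2_s1_s2_d1_d2_def using DC2 pos by simp
  have h3: "((\<lambda>s. Sn (C1 a5 k s)) has_real_derivative (- c1 * d1 / s1)) (at t)"
    using DSn[OF h1 S1] by (simp add: c1_c2_s1_s2_d1_d2_def(1,3))
  have h4: "((\<lambda>s. Sn (C2 a1 a2 s)) has_real_derivative (- c2 * d2 / s2)) (at t)"
    using DSn[OF h2 S2] by (simp add: c1_c2_s1_s2_d1_d2_def(2,4))
  have D: "(cph a1 a2 a5 k has_real_derivative (d1 * c2 + c1 * d2 - ((- c1 * d1 / s1) * s2 + s1 * (- c2 * d2 / s2)))) (at t)"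
    unfolding cph_def[abs_def] using h1 h2 h3 h4 unfolding c1_c2_s1_s2_d1_d2_def(1-4)
    by (auto intro!: derivative_eq_intros)
  have sp: "s1 > 0" "s2 > 0" using S1 S2 unfolding c1_c2_s1_s2_d1_d2_def by auto
  have e: "d1 * c2 + c1 * d2 - ((- c1 * d1 / s1) * s2 + s1 * (- c2 * d2 / s2))
     = (c2 * s1 + c1 * s2) * (d1 / s1 + d2 / s2)"
    using sp by (simp add: field_simps)
  have e2: "d1 / s1 + d2 / s2 = ((t - k^2 + a5^2) / (k * s1) + (t - a2^2 + a1^2) / (a2 * s2)) / (4 * t * sqrt t)"
    unfolding c1_c2_s1_s2_d1_d2_def(5,6) using pos sp by (simp add: field_simps)
  have "d1 / s1 + d2 / s2 > 0" unfolding e2 using ct pos unfolding c1_c2_s1_s2_d1_d2_def by simp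
  moreover have "c2 * s1 + c1 * s2 > 0" using sn unfolding c1_c2_s1_s2_d1_d2_def by simp
  ultimately show ?thesis using D e by (metis mult_pos_pos)
qed
lemma sgn1: "(a::real) > 0 \<Longrightarrow> b > 0 \<Longrightarrow> Y > 0 \<Longrightarrow> R > 0 \<Longrightarrow> - (2 * a * b * Y) / (2 * sqrt R) < 0"
  by (simp add: divide_neg_pos)
lemma sgn2: "(a::real) > 0 \<Longrightarrow> b > 0 \<Longrightarrow> Y < 0 \<Longrightarrow> R > 0 \<Longrightarrow> - (2 * a * b * Y) / (2 * sqrt R) > 0"
  by (simp add: mult_pos_neg divide_neg_pos)
lemma DF1:
  assumes pos: "k > 0" "a2 > 0"
    and d: "(cph a1 a2 a5 k has_real_derivative D) (at t)" "D > 0"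
    and r: "k^2 + a2^2 - 2 * k * a2 * cph a1 a2 a5 k t > 0"
  shows "\<exists>D. (F1 a1 a2 a5 k has_real_derivative D) (at t) \<and> D < 0"
proof -
  have "((\<lambda>s. k^2 + a2^2 - 2 * k * a2 * cph a1 a2 a5 k s) has_real_derivative (- (2 * k * a2 * D))) (at t)"
    using d by (auto intro!: derivative_eq_intros)
  from Dsqrt[OF this r] have "(F1 a1 a2 a5 k has_real_derivative (- (2 * k * a2 * D)) / (2 * sqrt (k^2 + a2^2 - 2 * k * a2 * cph a1 a2 a5 k t))) (at t)"
    unfolding F1_def[abs_def] .
  moreover have "(- (2 * k * a2 * D)) / (2 * sqrt (k^2 + a2^2 - 2 * k * a2 * cph a1 a2 a5 k t)) < 0"
    using pos d r by (simp add: divide_neg_pos)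
  ultimately show ?thesis by blast
qed

lemma DF3:
  assumes pos: "a2 > 0" "a3 > 0"
    and d: "(cph a1 a2 a5 k has_real_derivative D) (at t)" "D > 0"
    and Sc: "Sn (cph a1 a2 a5 k t) > 0"
    and g: "ca a3 a4 k * Sn (cph a1 a2 a5 k t) + Sn (ca a3 a4 k) * cph a1 a2 a5 k t > 0"
    and r: "a2^2 + a3^2 - 2 * a2 * a3 * (cph a1 a2 a5 k t * ca a3 a4 k - Sn (cph a1 a2 a5 k t) * Sn (ca a3 a4 k)) > 0"
  shows "\<exists>D. (F3 a1 a2 a3 a4 a5 k has_real_derivative D) (at t) \<and> D < 0"
proof -
  define c sc A SA where "c = cph a1 a2 a5 k t" "sc = Sn (cph a1 a2 a5 k t)" "A = ca a3 a4 k" "SA = Sn (ca a3 a4 k)"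
  have hs: "((\<lambda>s. Sn (cph a1 a2 a5 k s)) has_real_derivative (- c * D / sc)) (at t)"
    using DSn[OF d(1) Sc] by (simp add: c_sc_A_SA_def)
  have "((\<lambda>s. a2^2 + a3^2 - 2 * a2 * a3 * (cph a1 a2 a5 k s * A - Sn (cph a1 a2 a5 k s) * SA)) has_real_derivative
     (- (2 * a2 * a3 * (D * A - (- c * D / sc) * SA)))) (at t)"
    using d(1) hs by (auto intro!: derivative_eq_intros)
  from Dsqrt[OF this] r have "(F3 a1 a2 a3 a4 a5 k has_real_derivative (- (2 * a2 * a3 * (D * A - (- c * D / sc) * SA))) / (2 * sqrt (a2^2 + a3^2 - 2 * a2 * a3 * (c * A - sc * SA)))) (at t)"
    unfolding F3_def[abs_def] c_sc_A_SA_def by simp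
  moreover have "(- (2 * a2 * a3 * (D * A - (- c * D / sc) * SA))) / (2 * sqrt (a2^2 + a3^2 - 2 * a2 * a3 * (c * A - sc * SA))) < 0"
  proof -
    have scp: "sc > 0" using Sc by (simp add: c_sc_A_SA_def)
    have eq: "D * A - (- c * D / sc) * SA = D * (A * sc + SA * c) / sc" using scp by (simp add: field_simps)
    have "D * (A * sc + SA * c) / sc > 0" using scp d g by (simp add: c_sc_A_SA_def)
    moreover have r': "a2^2 + a3^2 - 2 * a2 * a3 * (c * A - sc * SA) > 0" using r by (simp add: c_sc_A_SA_def)
    ultimately show ?thesis unfolding eq by (rule sgn1[OF pos])
  qed
  ultimately show ?thesis by blast
qed

lemma DF5:
  assumes pos: "k > 0" "a4 > 0" "a5 > 0"
    and Sd: "Sn (D1 a5 k t) > 0"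
    and g: "d0 a3 a4 k * Sn (D1 a5 k t) + Sn (d0 a3 a4 k) * D1 a5 k t > 0"
    and r: "a4^2 + a5^2 - 2 * a4 * a5 * (d0 a3 a4 k * D1 a5 k t - Sn (d0 a3 a4 k) * Sn (D1 a5 k t)) > 0"
  shows "\<exists>D. (F5 a3 a4 a5 k has_real_derivative D) (at t) \<and> D > 0"
proof -
  define c sc A SA D where "c = D1 a5 k t" "sc = Sn (D1 a5 k t)" "A = d0 a3 a4 k" "SA = Sn (d0 a3 a4 k)" "D = - 1 / (2 * k * a5)"
  have d: "(D1 a5 k has_real_derivative D) (at t)" using DD1[OF pos(1,3)] by (simp add: c_sc_A_SA_D_def)
  have hs: "((\<lambda>s. Sn (D1 a5 k s)) has_real_derivative (- c * D / sc)) (at t)"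
    using DSn[OF d Sd] by (simp add: c_sc_A_SA_D_def(1,2))
  have "((\<lambda>s. a4^2 + a5^2 - 2 * a4 * a5 * (A * D1 a5 k s - SA * Sn (D1 a5 k s))) has_real_derivative
     (- (2 * a4 * a5 * (A * D - SA * (- c * D / sc))))) (at t)"
    using d hs by (auto intro!: derivative_eq_intros)
  from Dsqrt[OF this] r have "(F5 a3 a4 a5 k has_real_derivative (- (2 * a4 * a5 * (A * D - SA * (- c * D / sc)))) / (2 * sqrt (a4^2 + a5^2 - 2 * a4 * a5 * (A * c - SA * sc)))) (at t)"
    unfolding F5_def[abs_def] c_sc_A_SA_D_def(1-4) by simp
  moreover have "(- (2 * a4 * a5 * (A * D - SA * (- c * D / sc)))) / (2 * sqrt (a4^2 + a5^2 - 2 * a4 * a5 * (A * c - SA * sc))) > 0"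
  proof -
    have scp: "sc > 0" using Sd by (simp add: c_sc_A_SA_D_def)
    have Dn: "D < 0" using pos by (simp add: c_sc_A_SA_D_def divide_neg_pos)
    have eq: "A * D - SA * (- c * D / sc) = D * (A * sc + SA * c) / sc" using scp by (simp add: field_simps)
    have "D * (A * sc + SA * c) / sc < 0" using scp Dn g by (simp add: c_sc_A_SA_D_def(1-4) mult_neg_pos divide_neg_pos)
    moreover have r': "a4^2 + a5^2 - 2 * a4 * a5 * (A * c - SA * sc) > 0" using r by (simp add: c_sc_A_SA_D_def)
    ultimately show ?thesis unfolding eq by (rule sgn2[OF pos(2,3)])
  qed
  ultimately show ?thesis by blast
qed

lemma cross_cnj: "cross (cnj u) (cnj v) = - cross u v" unfolding cross_def by (simp add: algebra_simps)

lemma cm: "cmod (cnj x - cnj y) = cmod (x - y)"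
  by (metis complex_cnj_diff complex_mod_cnj)
lemma geo2:
  fixes P1 P2 P3 P4 P5 :: complex
  assumes d1: "cmod (P2 - P1) = a1" and d2: "cmod (P3 - P2) = a2" and d3: "cmod (P4 - P3) = a3"
    and d4: "cmod (P5 - P4) = a4" and d5: "cmod (P1 - P5) = a5" and dk: "cmod (P5 - P3) = k"
    and ds: "(cmod (P1 - P3))^2 = s"
    and or: "(cross (P1 - P5) (P3 - P5) > 0 \<and> cross (P2 - P1) (P3 - P1) > 0 \<and> cross (P3 - P2) (P5 - P2) > 0
       \<and> cross (P4 - P3) (P5 - P3) > 0 \<and> cross (P5 - P4) (P1 - P4) > 0 \<and> cross (P2 - P1) (P5 - P1) > 0
       \<and> cross (P3 - P2) (P4 - P2) > 0) \<or>
       (cross (P1 - P5) (P3 - P5) < 0 \<and> cross (P2 - P1) (P3 - P1) < 0 \<and> cross (P3 - P2) (P5 - P2) < 0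
       \<and> cross (P4 - P3) (P5 - P3) < 0 \<and> cross (P5 - P4) (P1 - P4) < 0 \<and> cross (P2 - P1) (P5 - P1) < 0
       \<and> cross (P3 - P2) (P4 - P2) < 0)"
  shows "(cmod (P2 - P5) = F1 a1 a2 a5 k s) \<and>
    (cmod (P4 - P2) = F3 a1 a2 a3 a4 a5 k s) \<and>
    (cmod (P1 - P4) = F5 a3 a4 a5 k s) \<and>
    (k > 0) \<and>
    (s > 0) \<and>
    (Sn (C1 a5 k s) > 0) \<and>
    (Sn (C2 a1 a2 s) > 0) \<and>
    (Sn (cph a1 a2 a5 k s) > 0) \<and>
    (Sn (D1 a5 k s) > 0) \<and>
    (C2 a1 a2 s * Sn (C1 a5 k s) + C1 a5 k s * Sn (C2 a1 a2 s) > 0) \<and>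
    ((s - k^2 + a5^2) / (k * Sn (C1 a5 k s)) + (s - a2^2 + a1^2) / (a2 * Sn (C2 a1 a2 s)) > 0) \<and>
    (ca a3 a4 k * Sn (cph a1 a2 a5 k s) + Sn (ca a3 a4 k) * cph a1 a2 a5 k s > 0) \<and>
    (d0 a3 a4 k * Sn (D1 a5 k s) + Sn (d0 a3 a4 k) * D1 a5 k s > 0) \<and>
    (k^2 + a2^2 - 2 * k * a2 * cph a1 a2 a5 k s > 0) \<and>
    (a2^2 + a3^2 - 2 * a2 * a3 * (cph a1 a2 a5 k s * ca a3 a4 k - Sn (cph a1 a2 a5 k s) * Sn (ca a3 a4 k)) > 0) \<and>
    (a4^2 + a5^2 - 2 * a4 * a5 * (d0 a3 a4 k * D1 a5 k s - Sn (d0 a3 a4 k) * Sn (D1 a5 k s)) > 0)"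
proof -
  note G = geo[OF d1 d2 d3 d4 d5 dk ds]
  note H = geo[of "cnj P2" "cnj P1" a1 "cnj P3" a2 "cnj P4" a3 "cnj P5" a4 a5 k s, unfolded cm cross_cnj[folded complex_cnj_diff] complex_cnj_diff[symmetric] cross_cnj neg_0_less_iff_less complex_mod_cnj, OF d1 d2 d3 d4 d5 dk ds]
  from or show ?thesis
  proof
    assume "cross (P1 - P5) (P3 - P5) > 0 \<and> cross (P2 - P1) (P3 - P1) > 0 \<and> cross (P3 - P2) (P5 - P2) > 0
       \<and> cross (P4 - P3) (P5 - P3) > 0 \<and> cross (P5 - P4) (P1 - P4) > 0 \<and> cross (P2 - P1) (P5 - P1) > 0
       \<and> cross (P3 - P2) (P4 - P2) > 0"
    then show ?thesis by (elim conjE) (intro conjI; rule G; assumption)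
  next
    assume "cross (P1 - P5) (P3 - P5) < 0 \<and> cross (P2 - P1) (P3 - P1) < 0 \<and> cross (P3 - P2) (P5 - P2) < 0
       \<and> cross (P4 - P3) (P5 - P3) < 0 \<and> cross (P5 - P4) (P1 - P4) < 0 \<and> cross (P2 - P1) (P5 - P1) < 0
       \<and> cross (P3 - P2) (P4 - P2) < 0"
    then show ?thesis by (elim conjE) (intro conjI; rule H; assumption)
  qed
qed

lemma ptv: "pt A 0 = A 5" "pt A 1 = A 1" "pt A 2 = A 2" "pt A 3 = A 3" "pt A 4 = A 4" "pt A 5 = A 5" "pt A 6 = A 1"
  by (simp_all add: pt_def)

lemma cfg:
  assumes c: "is_config a A" and sc: "strictly_convex A" and dk: "dist (pt A 3) (pt A 5) = k" and ds: "xd A 2 = s"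
  shows "bd A 1 = F1 (a 1) (a 2) (a 5) k s \<and> bd A 3 = F3 (a 1) (a 2) (a 3) (a 4) (a 5) k s
     \<and> bd A 5 = F5 (a 3) (a 4) (a 5) k s \<and>
    k > 0 \<and> s > 0 \<and> Sn (C1 (a 5) k s) > 0 \<and> Sn (C2 (a 1) (a 2) s) > 0 \<and> Sn (cph (a 1) (a 2) (a 5) k s) > 0 \<and> Sn (D1 (a 5) k s) > 0
    \<and> C2 (a 1) (a 2) s * Sn (C1 (a 5) k s) + C1 (a 5) k s * Sn (C2 (a 1) (a 2) s) > 0
    \<and> (s - k^2 + (a 5)^2) / (k * Sn (C1 (a 5) k s)) + (s - (a 2)^2 + (a 1)^2) / (a 2 * Sn (C2 (a 1) (a 2) s)) > 0
    \<and> ca (a 3) (a 4) k * Sn (cph (a 1) (a 2) (a 5) k s) + Sn (ca (a 3) (a 4) k) * cph (a 1) (a 2) (a 5) k s > 0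
    \<and> d0 (a 3) (a 4) k * Sn (D1 (a 5) k s) + Sn (d0 (a 3) (a 4) k) * D1 (a 5) k s > 0
    \<and> k^2 + (a 2)^2 - 2 * k * a 2 * cph (a 1) (a 2) (a 5) k s > 0
    \<and> (a 2)^2 + (a 3)^2 - 2 * a 2 * a 3 * (cph (a 1) (a 2) (a 5) k s * ca (a 3) (a 4) k - Sn (cph (a 1) (a 2) (a 5) k s) * Sn (ca (a 3) (a 4) k)) > 0
    \<and> (a 4)^2 + (a 5)^2 - 2 * a 4 * a 5 * (d0 (a 3) (a 4) k * D1 (a 5) k s - Sn (d0 (a 3) (a 4) k) * Sn (D1 (a 5) k s)) > 0"
proof -
  have cc: "\<And>i. i \<in> {1..5} \<Longrightarrow> dist (pt A i) (pt A (i + 1)) = a i" using c unfolding is_config_def by blast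
  have d1: "cmod (A 2 - A 1) = a 1" using cc[of 1] by (simp add: ptv dist_norm norm_minus_commute)
  have d2: "cmod (A 3 - A 2) = a 2" using cc[of 2] by (simp add: ptv dist_norm norm_minus_commute)
  have d3: "cmod (A 4 - A 3) = a 3" using cc[of 3] by (simp add: ptv dist_norm norm_minus_commute)
  have d4: "cmod (A 5 - A 4) = a 4" using cc[of 4] by (simp add: ptv dist_norm norm_minus_commute)
  have d5: "cmod (A 1 - A 5) = a 5" using cc[of 5] by (simp add: ptv dist_norm norm_minus_commute)
  have dk': "cmod (A 5 - A 3) = k" using dk by (simp add: ptv dist_norm norm_minus_commute)
  have ds': "(cmod (A 1 - A 3))^2 = s" using ds by (simp add: xd_def bd_def ptv dist_norm norm_minus_commute)
  have or: "(cross (A 1 - A 5) (A 3 - A 5) > 0 \<and> cross (A 2 - A 1) (A 3 - A 1) > 0 \<and> cross (A 3 - A 2) (A 5 - A 2) > 0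
       \<and> cross (A 4 - A 3) (A 5 - A 3) > 0 \<and> cross (A 5 - A 4) (A 1 - A 4) > 0 \<and> cross (A 2 - A 1) (A 5 - A 1) > 0
       \<and> cross (A 3 - A 2) (A 4 - A 2) > 0) \<or>
       (cross (A 1 - A 5) (A 3 - A 5) < 0 \<and> cross (A 2 - A 1) (A 3 - A 1) < 0 \<and> cross (A 3 - A 2) (A 5 - A 2) < 0
       \<and> cross (A 4 - A 3) (A 5 - A 3) < 0 \<and> cross (A 5 - A 4) (A 1 - A 4) < 0 \<and> cross (A 2 - A 1) (A 5 - A 1) < 0
       \<and> cross (A 3 - A 2) (A 4 - A 2) < 0)"
    using sc unfolding strictly_convex_def
  proof (elim disjE)
    assume h: "\<forall>i\<in>{1..5}. \<forall>j\<in>{1..5}. j mod 5 \<noteq> i mod 5 \<and> j mod 5 \<noteq> (i + 1) mod 5 \<longrightarrow>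
        cross (pt A (i + 1) - pt A i) (pt A j - pt A i) > 0"
    have "cross (pt A (5 + 1) - pt A 5) (pt A 3 - pt A 5) > 0" using h[rule_format, of 5 3] by simp
    moreover have "cross (pt A (1 + 1) - pt A 1) (pt A 3 - pt A 1) > 0" using h[rule_format, of 1 3] by simp
    moreover have "cross (pt A (2 + 1) - pt A 2) (pt A 5 - pt A 2) > 0" using h[rule_format, of 2 5] by simp
    moreover have "cross (pt A (3 + 1) - pt A 3) (pt A 5 - pt A 3) > 0" using h[rule_format, of 3 5] by simp
    moreover have "cross (pt A (4 + 1) - pt A 4) (pt A 1 - pt A 4) > 0" using h[rule_format, of 4 1] by simp
    moreover have "cross (pt A (1 + 1) - pt A 1) (pt A 5 - pt A 1) > 0" using h[rule_format, of 1 5] by simp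
    moreover have "cross (pt A (2 + 1) - pt A 2) (pt A 4 - pt A 2) > 0" using h[rule_format, of 2 4] by simp
    ultimately show ?thesis by (simp add: ptv)
  next
    assume h: "\<forall>i\<in>{1..5}. \<forall>j\<in>{1..5}. j mod 5 \<noteq> i mod 5 \<and> j mod 5 \<noteq> (i + 1) mod 5 \<longrightarrow>
        cross (pt A (i + 1) - pt A i) (pt A j - pt A i) < 0"
    have "cross (pt A (5 + 1) - pt A 5) (pt A 3 - pt A 5) < 0" using h[rule_format, of 5 3] by simp
    moreover have "cross (pt A (1 + 1) - pt A 1) (pt A 3 - pt A 1) < 0" using h[rule_format, of 1 3] by simp
    moreover have "cross (pt A (2 + 1) - pt A 2) (pt A 5 - pt A 2) < 0" using h[rule_format, of 2 5] by simp
    moreover have "cross (pt A (3 + 1) - pt A 3) (pt A 5 - pt A 3) < 0" using h[rule_format, of 3 5] by simp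
    moreover have "cross (pt A (4 + 1) - pt A 4) (pt A 1 - pt A 4) < 0" using h[rule_format, of 4 1] by simp
    moreover have "cross (pt A (1 + 1) - pt A 1) (pt A 5 - pt A 1) < 0" using h[rule_format, of 1 5] by simp
    moreover have "cross (pt A (2 + 1) - pt A 2) (pt A 4 - pt A 2) < 0" using h[rule_format, of 2 4] by simp
    ultimately show ?thesis by (simp add: ptv)
  qed
  note G = geo2[OF d1 d2 d3 d4 d5 dk' ds' or]
  have b: "bd A 1 = cmod (A 2 - A 5)" "bd A 3 = cmod (A 4 - A 2)" "bd A 5 = cmod (A 1 - A 4)"
    by (simp_all add: bd_def ptv dist_norm norm_minus_commute)
  show ?thesis unfolding b using G by blast
qed

theorem lemma5:
  fixes a :: "int \<Rightarrow> real" and k :: real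
    and \<gamma> :: "real \<Rightarrow> int \<Rightarrow> complex" and S :: "real set" and t :: real
  assumes "\<forall>i\<in>{1..5}. a i > 0"
    and "open S"
    and "\<forall>s\<in>S. is_config a (\<gamma> s) \<and> strictly_convex (\<gamma> s) \<and>
                 dist (pt (\<gamma> s) 3) (pt (\<gamma> s) 5) = k \<and> xd (\<gamma> s) 2 = s"
    and "t \<in> S"
  shows "(\<exists>D. ((\<lambda>s. bd (\<gamma> s) 1) has_real_derivative D) (at t) \<and> D < 0)
       \<and> (\<exists>D. ((\<lambda>s. bd (\<gamma> s) 3) has_real_derivative D) (at t) \<and> D < 0)
       \<and> (\<exists>D. ((\<lambda>s. bd (\<gamma> s) 5) has_real_derivative D) (at t) \<and> D > 0)"
proof -
  have ap: "a 1 > 0" "a 2 > 0" "a 3 > 0" "a 4 > 0" "a 5 > 0" using assms(1) by auto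
  have eq: "\<And>s. s \<in> S \<Longrightarrow> bd (\<gamma> s) 1 = F1 (a 1) (a 2) (a 5) k s \<and> bd (\<gamma> s) 3 = F3 (a 1) (a 2) (a 3) (a 4) (a 5) k s
     \<and> bd (\<gamma> s) 5 = F5 (a 3) (a 4) (a 5) k s"
  proof -
    fix s assume "s \<in> S"
    hence "is_config a (\<gamma> s)" "strictly_convex (\<gamma> s)" "dist (pt (\<gamma> s) 3) (pt (\<gamma> s) 5) = k" "xd (\<gamma> s) 2 = s"
      using assms(3) by auto
    from cfg[OF this] show "?thesis s" by blast
  qed
  have "is_config a (\<gamma> t)" "strictly_convex (\<gamma> t)" "dist (pt (\<gamma> t) 3) (pt (\<gamma> t) 5) = k" "xd (\<gamma> t) 2 = t"
    using assms(3,4) by auto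
  note T = cfg[OF this]
  have kp: "k > 0" "t > 0" using T by auto
  obtain D where D: "(cph (a 1) (a 2) (a 5) k has_real_derivative D) (at t)" "D > 0"
    using Dcph[OF kp(1) ap(2) kp(2)] T by blast
  obtain E1 where E1: "(F1 (a 1) (a 2) (a 5) k has_real_derivative E1) (at t)" "E1 < 0"
    using DF1[OF kp(1) ap(2) D] T by blast
  obtain E3 where E3: "(F3 (a 1) (a 2) (a 3) (a 4) (a 5) k has_real_derivative E3) (at t)" "E3 < 0"
    using DF3[OF ap(2,3) D] T by blast
  obtain E5 where E5: "(F5 (a 3) (a 4) (a 5) k has_real_derivative E5) (at t)" "E5 > 0"
    using DF5[OF kp(1) ap(4,5)] T by blast
  have "((\<lambda>s. bd (\<gamma> s) 1) has_real_derivative E1) (at t)"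
    by (rule has_field_derivative_transform_within_open[OF E1(1) assms(2,4)]) (use eq in auto)
  moreover have "((\<lambda>s. bd (\<gamma> s) 3) has_real_derivative E3) (at t)"
    by (rule has_field_derivative_transform_within_open[OF E3(1) assms(2,4)]) (use eq in auto)
  moreover have "((\<lambda>s. bd (\<gamma> s) 5) has_real_derivative E5) (at t)"
    by (rule has_field_derivative_transform_within_open[OF E5(1) assms(2,4)]) (use eq in auto)
  ultimately show ?thesis using E1(2) E3(2) E5(2) by blast
qed

end
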